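(* Let $p\equiv 5\pmod 6$ be a prime, let $n$ be the multiplicative order of $2$ modulo $p$, and let $e$ be the multiplicative order of $p$ modulo $3n$. Then $e=2$. *)

theory Defs
  imports "HOL-Number_Theory.Number_Theory"
begin

end

theory Submission
  imports Defs
begin

lemma aux_a: "(p::nat) \<ge> 5 \<Longrightarrow> p^2 - 1 = (p - 1) * (p + 1)"
  by (cases p) (auto simp: power2_eq_square algebra_simps)
lemma aux_b: "(p::nat) \<ge> 5 \<Longrightarrow> m dvd p^2 - 1 \<Longrightarrow> [p^2 = 1] (mod m)"
  by (simp add: cong_altdef_nat)
lemma aux_c: "(p::nat) \<ge> 5 \<Longrightarrow> p^2 - 1 = q \<Longrightarrow> p^2 = q + 1"
proof -
  assume "p \<ge> 5" "p^2 - 1 = q"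
  moreover have "p^2 \<ge> 1" using \<open>p \<ge> 5\<close> by simp
  ultimately show ?thesis by linarith
qed

theorem proposition3p11:
  fixes p n e :: nat
  assumes "prime p"
    and "[p = 5] (mod 6)"
    and "n = ord p 2"
    and "e = ord (3 * n) p"
  shows "e = 2"
proof -
  have pm: "p mod 6 = 5" using assms(2) by (simp add: cong_def)
  have p3: "p mod 3 = 2" using pm by presburger
  have p5: "p \<ge> 5" using pm by presburger
  have op: "odd p" using pm by presburger
  have cp2: "coprime p 2" using op by simp
  have nd: "\<not> p dvd 2" using p5 by (auto dest: dvd_imp_le)
  have f: "[2 ^ (p - 1) = 1] (mod p)" using fermat_theorem[OF assms(1) nd] by simp
  have "n dvd p - 1" using f assms(3) ord_divides by blast
  then obtain k where k: "p - 1 = n * k" by blast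
  have "3 dvd p + 1" using p3 by presburger
  then obtain j where j: "p + 1 = 3 * j" by blast
  have "p^2 - 1 = (p - 1) * (p + 1)" using p5 by (rule aux_a)
  also have "\<dots> = (3 * n) * (k * j)" using k j by simp
  finally have d: "3 * n dvd p^2 - 1" by simp
  have c: "[p^2 = 1] (mod 3 * n)"
    using aux_b[OF p5 d] .
  have cop: "coprime (3 * n) p"
  proof -
    obtain m where m: "p^2 - 1 = 3 * n * m" using d by blast
    have "p^2 = 3 * n * m + 1" using aux_c[OF p5 m] .
    moreover have "coprime (3*n*m+1) (3*n*m)" by (rule coprime_add_one_left)
    ultimately have "coprime (p^2) ((3*n)*m)" by simp
    then have "coprime (p^2) (3*n)" by (simp only: coprime_mult_right_iff)
    then show ?thesis by (simp add: coprime_commute)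
  qed
  have "ord (3*n) p dvd 2" using c ord_divides by blast
  moreover have "ord (3*n) p \<noteq> 0" using cop ord_eq_0 by blast
  moreover have "ord (3*n) p \<noteq> 1"
  proof
    assume "ord (3*n) p = 1"
    then have "[p = 1] (mod 3*n)" using ord_eq_Suc_0_iff by simp
    then have "[p = 1] (mod 3)" using cong_modulus_mult_nat by blast
    then show False using p3 by (simp add: cong_def)
  qed
  moreover have "ord (3*n) p \<le> 2" using calculation(1) by (rule dvd_imp_le) simp
  ultimately show ?thesis using assms(4) by linarith
qed

end
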